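(* Let $Z\sim N(0,1)$ and $X=H_4(Z)=Z^4-6Z^2+3$. Let $f$ be three times differentiable on $(-6,\infty)$, and suppose that $\mathbb{E}|X^2f^{(i)}(X)|<\infty$ for $i=2,3$, $\mathbb{E}|Xf^{(j)}(X)|<\infty$ for $j=0,1,2,3$, and $\mathbb{E}|f^{(k)}(X)|<\infty$ for $k=1,2,3$. Then $$\mathbb{E}\big[192(X+6)(3-X)f^{(3)}(X)+16(X+3)(X-12)f''(X)+4(11X+6)f'(X)-Xf(X)\big]=0.$$
   Context: $f^{(0)}\equiv f$, and $f^{(k)}$ denotes the $k$-th derivative of $f$. $H_4(x)=x^4-6x^2+3$ is the fourth Hermite polynomial. *)

theory Defs
  imports "HOL-Probability.Probability"
begin

definition H4 :: "real \<Rightarrow> real" where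
  "H4 x = x ^ 4 - 6 * x ^ 2 + 3"

end

theory Submission
  imports Defs
begin


lemma ftc_zero:
  fixes F g :: "real \<Rightarrow> real" and S :: "real set"
  assumes g: "integrable lborel g" and S: "finite S"
    and cont: "continuous_on UNIV F"
    and der: "\<And>x. x \<notin> S \<Longrightarrow> (F has_real_derivative g x) (at x)"
    and lim: "((\<lambda>t. F t - F (-t)) \<longlongrightarrow> 0) at_top"
  shows "integral\<^sup>L lborel g = 0"
proof -
  have int_eq: "(\<integral>x. indicator {-t..t} x * g x \<partial>lborel) = F t - F (-t)" if "t \<ge> 0" for t
  proof -
    have si: "set_integrable lborel {-t..t} g"
      unfolding set_integrable_def using g by (intro integrable_mult_indicator) auto
    have "(g has_integral (F t - F (-t))) {-t..t}"
      by (rule fundamental_theorem_of_calculus_interior_strong[OF S])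
        (use that der in \<open>auto simp: has_real_derivative_iff_has_vector_derivative[symmetric] intro: continuous_on_subset[OF cont]\<close>)
    then have "integral {-t..t} g = F t - F (-t)" by (rule integral_unique)
    with set_borel_integral_eq_integral(2)[OF si] show ?thesis
      by (simp add: set_lebesgue_integral_def)
  qed
  have "((\<lambda>t. \<integral>x. indicator {-t..t} x * g x \<partial>lborel) \<longlongrightarrow> integral\<^sup>L lborel g) at_top"
  proof (rule integral_dominated_convergence_at_top[where w = "\<lambda>x. norm (g x)"])
    show "g \<in> borel_measurable lborel" using g by auto
    show "(\<lambda>x. indicator {- t..t} x * g x) \<in> borel_measurable lborel" for t
      using g by auto
    show "integrable lborel (\<lambda>x. norm (g x))" using g by auto
    show "AE x in lborel. ((\<lambda>t. indicator {- t..t} x * g x) \<longlongrightarrow> g x) at_top"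
    proof (rule AE_I2)
      fix x
      have "eventually (\<lambda>t. indicator {- t..t} x * g x = g x) at_top"
        using eventually_ge_at_top[of "\<bar>x\<bar>"] by eventually_elim (auto simp: indicator_def)
      then show "((\<lambda>t. indicator {- t..t} x * g x) \<longlongrightarrow> g x) at_top"
        by (rule tendsto_eventually)
    qed
    show "\<forall>\<^sub>F t in at_top. AE x in lborel. norm (indicator {- t..t} x * g x) \<le> norm (g x)"
      by (auto simp: indicator_def)
  qed
  moreover have "eventually (\<lambda>t. (\<integral>x. indicator {-t..t} x * g x \<partial>lborel) = F t - F (-t)) at_top"
    using eventually_ge_at_top[of 0] by eventually_elim (use int_eq in auto)
  ultimately have "((\<lambda>t. F t - F (-t)) \<longlongrightarrow> integral\<^sup>L lborel g) at_top"
    by (rule Lim_transform_eventually)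
  from tendsto_unique[OF _ this lim] show ?thesis by simp
qed



lemma ftc_interval:
  fixes F g :: "real \<Rightarrow> real" and S :: "real set"
  assumes g: "set_integrable lborel {a..b} g" and S: "finite S" and ab: "a \<le> b"
    and cont: "continuous_on {a..b} F"
    and der: "\<And>x. a < x \<Longrightarrow> x < b \<Longrightarrow> x \<notin> S \<Longrightarrow> (F has_real_derivative g x) (at x)"
  shows "(LINT x:{a..b}|lborel. g x) = F b - F a"
proof -
  have "(g has_integral (F b - F a)) {a..b}"
    by (rule fundamental_theorem_of_calculus_interior_strong[OF S ab])
      (use der cont in \<open>auto simp: has_real_derivative_iff_has_vector_derivative[symmetric]\<close>)
  then have "integral {a..b} g = F b - F a" by (rule integral_unique)
  with set_borel_integral_eq_integral(2)[OF g] show ?thesis by simp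
qed

lemma lim_zero_at_top:
  fixes F g r :: "real \<Rightarrow> real"
  assumes g: "integrable lborel g" and S: "finite S" and cont: "continuous_on UNIV F"
    and der: "\<And>x. x \<notin> S \<Longrightarrow> (F has_real_derivative g x) (at x)"
    and r: "integrable lborel r"
    and bnd: "\<And>z. z \<ge> R \<Longrightarrow> \<bar>F z\<bar> \<le> z * r z"
    and R: "R \<ge> 1"
  shows "(F \<longlongrightarrow> 0) at_top"
proof -
  have gs: "set_integrable lborel A g" if "A \<in> sets lborel" for A
    unfolding set_integrable_def using g that by (intro integrable_mult_indicator) auto
  define L where "L = F R + (LINT x:{R..}|lborel. g x)"
  have eq: "F t = F R + (LINT x:{R..t}|lborel. g x)" if "t \<ge> R" for t
    using ftc_interval[OF gs S that continuous_on_subset[OF cont] der] by auto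
  have "((\<lambda>t. F R + (LINT x:{R..t}|lborel. g x)) \<longlongrightarrow> L) at_top"
  proof -
    have "((\<lambda>t. LINT x:{R..t}|lborel. g x) \<longlongrightarrow> (LINT x:{R..}|lborel. g x)) at_top"
      by (rule tendsto_set_lebesgue_integral_at_top) (simp, rule gs, simp)
    then show ?thesis unfolding L_def by (rule tendsto_add[OF tendsto_const])
  qed
  moreover have "eventually (\<lambda>t. F R + (LINT x:{R..t}|lborel. g x) = F t) at_top"
    using eventually_ge_at_top[of R] by eventually_elim (rule eq[symmetric])
  ultimately have FL: "(F \<longlongrightarrow> L) at_top" by (rule Lim_transform_eventually)
  have "L = 0"
  proof (rule ccontr)
    assume "L \<noteq> 0"
    then have "\<bar>L\<bar> / 2 > 0" by simp
    with FL have "eventually (\<lambda>z. dist (F z) L < \<bar>L\<bar> / 2) at_top"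
      by (rule tendstoD)
    then obtain T0 where T0: "\<And>z. z \<ge> T0 \<Longrightarrow> dist (F z) L < \<bar>L\<bar> / 2"
      by (auto simp: eventually_at_top_linorder)
    define T where "T = max T0 R"
    have T1: "T \<ge> 1" "T \<ge> R" "T \<ge> T0" using R by (auto simp: T_def)
    define c where "c = 2 / \<bar>L\<bar>"
    have c: "c > 0" using \<open>L \<noteq> 0\<close> by (simp add: c_def)
    have key: "1 / z \<le> c * \<bar>r z\<bar>" if "z \<ge> T" for z
    proof -
      have "\<bar>F z - L\<bar> < \<bar>L\<bar> / 2" using T0[of z] that T1 by (auto simp: dist_real_def)
      then have "\<bar>L\<bar> / 2 \<le> \<bar>F z\<bar>" by linarith
      also have "\<dots> \<le> z * r z" using bnd[of z] that T1 by auto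
      also have "\<dots> \<le> z * \<bar>r z\<bar>" using that T1 by (intro mult_left_mono) auto
      finally have "\<bar>L\<bar> / 2 \<le> z * \<bar>r z\<bar>" .
      then show ?thesis using that T1 \<open>L \<noteq> 0\<close>
        by (simp add: c_def field_simps)
    qed
    define C where "C = c * (\<integral>z. \<bar>r z\<bar> \<partial>lborel)"
    have bound: "ln t - ln T \<le> C" if "t \<ge> T" for t
    proof -
      have cont1: "continuous_on {T..t} (\<lambda>z. 1 / z)" using T1
        by (intro continuous_intros) auto
      have "ln t - ln T = (LINT z:{T..t}|lborel. 1 / z)"
        by (rule ftc_interval[where S="{}", symmetric])
           (use that T1 cont1 in \<open>auto intro!: borel_integrable_atLeastAtMost' continuous_on_ln derivative_eq_intros\<close>)
      also have "\<dots> \<le> (LINT z:{T..t}|lborel. c * \<bar>r z\<bar>)"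
      proof (rule set_integral_mono)
        show "set_integrable lborel {T..t} (\<lambda>z. 1 / z)"
          by (rule borel_integrable_atLeastAtMost'[OF cont1])
        show "set_integrable lborel {T..t} (\<lambda>z. c * \<bar>r z\<bar>)"
          unfolding set_integrable_def using r by (intro integrable_mult_indicator integrable_mult_right integrable_abs) auto
      qed (use key in auto)
      also have "\<dots> \<le> C"
      proof -
        have i1: "integrable lborel (\<lambda>x. indicator {T..t} x *\<^sub>R (c * \<bar>r x\<bar>))"
          using r by (intro integrable_mult_indicator integrable_mult_right integrable_abs) auto
        have "(LINT z:{T..t}|lborel. c * \<bar>r z\<bar>) \<le> (\<integral>z. c * \<bar>r z\<bar> \<partial>lborel)"
          unfolding set_lebesgue_integral_def
          by (rule integral_mono[OF i1]) (use r c in \<open>auto simp: indicator_def\<close>)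
        then show ?thesis unfolding C_def by simp
      qed
      finally show ?thesis .
    qed
    define t where "t = exp (C + ln T + 1)"
    have C0: "C \<ge> 0" unfolding C_def using c by (intro mult_nonneg_nonneg integral_nonneg_AE) auto
    have "T = exp (ln T)" using T1 by simp
    also have "\<dots> \<le> t" unfolding t_def using C0 by simp
    finally have "t \<ge> T" .
    from bound[OF this] show False using T1 by (simp add: t_def)
  qed
  with FL show ?thesis by simp
qed



lemma lim_at_right_exists:
  fixes u u' :: "real \<Rightarrow> real"
  assumes pq: "p < q" and der: "\<And>z. p < z \<Longrightarrow> z < q \<Longrightarrow> (u has_real_derivative u' z) (at z)"
    and int: "set_integrable lborel {p..q} u'"
  shows "\<exists>L. (u \<longlongrightarrow> L) (at_right p)"
proof -
  define m where "m = (p + q) / 2"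
  have pm: "p < m" "m < q" using pq by (auto simp: m_def)
  have intm: "set_integrable lborel {p..m} u'"
    by (rule set_integrable_subset[OF int]) (use pm in auto)
  have ion: "u' integrable_on {p..m}" by (rule set_borel_integral_eq_integral(1)[OF intm])
  have eq: "u z = u m - integral {z..m} u'" if "p < z" "z \<le> m" for z
  proof -
    have "(u' has_integral (u m - u z)) {z..m}"
    proof (rule fundamental_theorem_of_calculus_interior_strong[where S="{}"])
      show "continuous_on {z..m} u"
      proof (intro continuous_at_imp_continuous_on ballI)
        fix x assume "x \<in> {z..m}"
        then have "(u has_real_derivative u' x) (at x)" using der that pm by auto
        then show "isCont u x" by (rule DERIV_isCont)
      qed
    qed (use der that pm in \<open>auto simp: has_real_derivative_iff_has_vector_derivative[symmetric]\<close>)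
    then show ?thesis by (simp add: integral_unique)
  qed
  have "continuous_on {p..m} (\<lambda>x. integral {x..m} u')"
    by (rule indefinite_integral_continuous_1'[OF ion])
  then have "((\<lambda>x. integral {x..m} u') \<longlongrightarrow> integral {p..m} u') (at p within {p..m})"
    using pm by (auto simp: continuous_on_def)
  then have "((\<lambda>x. integral {x..m} u') \<longlongrightarrow> integral {p..m} u') (at_right p)"
    using pm by (simp add: at_within_Icc_at_right)
  then have "((\<lambda>x. u m - integral {x..m} u') \<longlongrightarrow> u m - integral {p..m} u') (at_right p)"
    by (intro tendsto_diff tendsto_const)
  moreover have "eventually (\<lambda>x. u m - integral {x..m} u' = u x) (at_right p)"
    using pm unfolding eventually_at_right[OF pm(1)] by (intro exI[of _ m]) (auto intro: eq[symmetric])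
  ultimately show ?thesis by (blast intro: Lim_transform_eventually)
qed



lemma meas_restrict_cont:
  fixes g :: "real \<Rightarrow> real"
  assumes "\<And>x. x > a \<Longrightarrow> g differentiable (at x)"
  shows "(\<lambda>x. if x > a then g x else 0) \<in> borel_measurable borel"
proof -
  have "(\<lambda>x. if x \<in> {a<..} then g x else 0) \<in> borel_measurable borel"
    by (rule borel_measurable_continuous_on_if)
       (use assms in \<open>auto intro!: continuous_at_imp_continuous_on differentiable_imp_continuous_within continuous_intros\<close>)
  then show ?thesis by simp
qed

lemma meas_restrict_deriv:
  fixes g :: "real \<Rightarrow> real"
  assumes dg: "\<And>x. x > a \<Longrightarrow> g differentiable (at x)"
  shows "(\<lambda>x. if x > a then deriv g x else 0) \<in> borel_measurable borel"
proof -
  define gt where "gt = (\<lambda>x. if x > a then g x else 0)"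
  have gm[measurable]: "gt \<in> borel_measurable borel" unfolding gt_def by (rule meas_restrict_cont[OF dg])
  define q where "q = (\<lambda>(n::nat) x. if x > a then (gt (x + 1 / Suc n) - gt x) * Suc n else 0)"
  show ?thesis
  proof (rule borel_measurable_LIMSEQ_real[where u = q])
    show "q n \<in> borel_measurable borel" for n
      unfolding q_def by measurable
    fix x :: real
    show "(\<lambda>n. q n x) \<longlonglongrightarrow> (if x > a then deriv g x else 0)"
    proof (cases "x > a")
      case False then show ?thesis by (simp add: q_def)
    next
      case True
      have "DERIV g x :> deriv g x" using dg[OF True] by (simp add: DERIV_deriv_iff_real_differentiable)
      then have lim0: "((\<lambda>h. (g (x + h) - g x) / h) \<longlongrightarrow> deriv g x) (at 0)" by (rule DERIV_D)
      have "filterlim (\<lambda>n::nat. 1 / real (Suc n)) (at 0) sequentially"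
        unfolding filterlim_at by (auto intro: LIMSEQ_Suc[OF lim_inverse_n'] simp del: of_nat_Suc)
      from filterlim_compose[OF lim0 this]
      have "(\<lambda>n. (g (x + 1 / real (Suc n)) - g x) / (1 / real (Suc n))) \<longlonglongrightarrow> deriv g x"
        by (simp add: o_def)
      moreover have "q n x = (g (x + 1 / real (Suc n)) - g x) / (1 / real (Suc n))" for n
      proof -
        have "x + 1 / real (Suc n) > a" using True by (smt (verit) of_nat_0_less_iff zero_less_Suc divide_pos_pos)
        then show ?thesis using True by (simp add: q_def gt_def)
      qed
      ultimately show ?thesis using True by simp
    qed
  qed
qed

theorem proposition2p4:
  fixes M :: "'a measure" and Z :: "'a \<Rightarrow> real" and f :: "real \<Rightarrow> real"
  assumes "prob_space M"
    and "distributed M lborel Z std_normal_density"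
    and diff: "\<And>k x. k < 3 \<Longrightarrow> x > -6 \<Longrightarrow> (deriv ^^ k) f differentiable (at x)"
    and int2: "\<And>i. i \<in> {2, 3} \<Longrightarrow>
       integrable M (\<lambda>\<omega>. (H4 (Z \<omega>))\<^sup>2 * (deriv ^^ i) f (H4 (Z \<omega>)))"
    and int1: "\<And>j. j \<in> {0, 1, 2, 3} \<Longrightarrow>
       integrable M (\<lambda>\<omega>. H4 (Z \<omega>) * (deriv ^^ j) f (H4 (Z \<omega>)))"
    and int0: "\<And>k. k \<in> {1, 2, 3} \<Longrightarrow>
       integrable M (\<lambda>\<omega>. (deriv ^^ k) f (H4 (Z \<omega>)))"
  shows "(\<integral>\<omega>. (let X = H4 (Z \<omega>) in
            192 * (X + 6) * (3 - X) * (deriv ^^ 3) f X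
          + 16 * (X + 3) * (X - 12) * (deriv ^^ 2) f X
          + 4 * (11 * X + 6) * deriv f X
          - X * f X) \<partial>M) = 0"
proof -
  note distr = assms(2)
  define Fk where "Fk = (\<lambda>k. (deriv ^^ k) f)"
  define D where "D = (\<lambda>k x. if x > -6 then Fk k x else 0)"
  have FkS: "Fk (Suc k) = deriv (Fk k)" for k by (simp add: Fk_def)
  have diffF: "Fk k differentiable (at x)" if "k < 3" "x > -6" for k x
    using diff[OF that] by (simp add: Fk_def)
  have FD: "Fk k x = D k x" if "x > -6" for k x using that by (simp add: D_def)
  have Dm: "D k \<in> borel_measurable borel" if "k \<le> 3" for k
  proof -
    have "k < 3 \<or> k = 3" using that by auto
    then show ?thesis
    proof
      assume "k < 3"
      then show ?thesis unfolding D_def using meas_restrict_cont[of "-6" "Fk k"] diffF by auto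
    next
      assume k3: "k = 3"
      have "Fk 3 = deriv (Fk 2)" using FkS[of 2] by (simp add: numeral_3_eq_3 numeral_2_eq_2)
      have "(\<lambda>x. if -6 < x then deriv (Fk 2) x else 0) \<in> borel_measurable borel"
        by (rule meas_restrict_deriv) (use diffF in auto)
      then show ?thesis unfolding D_def k3 by (subst \<open>Fk 3 = deriv (Fk 2)\<close>)
    qed
  qed
  have H4m[measurable]: "H4 \<in> borel_measurable borel" unfolding H4_def[abs_def] by measurable
  have Zm[measurable]: "Z \<in> borel_measurable M" using distributed_measurable[OF distr] by simp
  have phim[measurable]: "std_normal_density \<in> borel_measurable borel"
    using distributed_real_measurable[OF _ distr] by simp
  have phipos: "std_normal_density z > 0" for z by (simp add: normal_density_pos)
  have H6: "H4 z + 6 = (z\<^sup>2 - 3)\<^sup>2" for z unfolding H4_def by algebra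
  have Hgt: "H4 z > -6" if "z \<noteq> sqrt 3" "z \<noteq> - sqrt 3" for z
  proof -
    have "z\<^sup>2 \<noteq> 3"
    proof
      assume "z\<^sup>2 = 3"
      then have "\<bar>z\<bar> = sqrt 3" by (metis real_sqrt_abs)
      then show False using that by (auto simp: abs_if split: if_splits)
    qed
    then have "(z\<^sup>2 - 3)\<^sup>2 > 0" by simp
    with H6[of z] show ?thesis by linarith
  qed
  have AEZ: "AE \<omega> in M. Z \<omega> \<noteq> sqrt 3 \<and> Z \<omega> \<noteq> - sqrt 3"
  proof -
    have "AE x in lborel. x \<noteq> sqrt 3 \<and> x \<noteq> - sqrt 3"
      using AE_lborel_singleton[of "sqrt 3"] AE_lborel_singleton[of "- sqrt 3"]
      by eventually_elim auto
    then have "AE x in distr M lborel Z. x \<noteq> sqrt 3 \<and> x \<noteq> - sqrt 3"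
      unfolding distributed_distr_eq_density[OF distr] by (subst AE_density) (auto elim: AE_mp)
    then show ?thesis by (rule AE_distrD[OF distributed_measurable[OF distr]])
  qed
  have AEH: "AE \<omega> in M. H4 (Z \<omega>) > -6" using AEZ by eventually_elim (auto intro: Hgt)
  have trans: "integrable lborel (\<lambda>z. std_normal_density z * (p z * D k (H4 z)))"
    if k3: "k \<le> 3" and intM: "integrable M (\<lambda>\<omega>. p (Z \<omega>) * Fk k (H4 (Z \<omega>)))"
      and pm: "p \<in> borel_measurable borel" for p k
  proof -
    note [measurable] = Dm[OF k3] pm
    have "integrable M (\<lambda>\<omega>. p (Z \<omega>) * D k (H4 (Z \<omega>)))"
      by (rule integrable_cong_AE_imp[OF intM]) (measurable, use AEH in \<open>eventually_elim, simp add: FD\<close>)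
    then show ?thesis
      using distributed_integrable[OF distr, of "\<lambda>z. p z * D k (H4 z)"] by simp
  qed
  have iH2: "integrable lborel (\<lambda>z. std_normal_density z * ((H4 z)\<^sup>2 * D k (H4 z)))" if "k \<in> {2,3}" for k
    by (rule trans) (use that int2[OF that] in \<open>auto simp: Fk_def\<close>)
  have iH1: "integrable lborel (\<lambda>z. std_normal_density z * (H4 z * D k (H4 z)))" if "k \<in> {0,1,2,3}" for k
    by (rule trans) (use that int1[OF that] in \<open>auto simp: Fk_def\<close>)
  have iH0: "integrable lborel (\<lambda>z. std_normal_density z * D k (H4 z))" if "k \<in> {1,2,3}" for k
    using trans[of k "\<lambda>_. 1"] that int0[OF that] by (auto simp: Fk_def)
  define Itil where "Itil = (\<lambda>z. let X = H4 z in
            192 * (X + 6) * (3 - X) * D 3 X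
          + 16 * (X + 3) * (X - 12) * D 2 X
          + 4 * (11 * X + 6) * D 1 X
          - X * D 0 X)"
  have Itilm[measurable]: "Itil \<in> borel_measurable borel"
  proof -
    note [measurable] = Dm[of 0] Dm[of 1] Dm[of 2] Dm[of 3]
    show ?thesis unfolding Itil_def Let_def by measurable
  qed
  let ?phi = std_normal_density
  have g_eq: "(\<lambda>z. ?phi z * Itil z) = (\<lambda>z.
      - 192 * (?phi z * ((H4 z)\<^sup>2 * D 3 (H4 z))) - 576 * (?phi z * (H4 z * D 3 (H4 z))) + 3456 * (?phi z * D 3 (H4 z))
      + 16 * (?phi z * ((H4 z)\<^sup>2 * D 2 (H4 z))) - 144 * (?phi z * (H4 z * D 2 (H4 z))) - 576 * (?phi z * D 2 (H4 z))
      + 44 * (?phi z * (H4 z * D 1 (H4 z))) + 24 * (?phi z * D 1 (H4 z))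
      - (?phi z * (H4 z * D 0 (H4 z))))"
    by (rule ext) (unfold Itil_def Let_def, algebra)
  have g_int: "integrable lborel (\<lambda>z. ?phi z * Itil z)"
    unfolding g_eq
    by (intro Bochner_Integration.integrable_add Bochner_Integration.integrable_diff Bochner_Integration.integrable_mult_right Bochner_Integration.integrable_minus iH2 iH1 iH0) auto
  have d01: "(deriv ^^ 0) f = f" "(deriv ^^ 1) f = deriv f" by (simp_all add: One_nat_def)
  have stmt_eq: "(\<lambda>\<omega>. (let X = H4 (Z \<omega>) in
            192 * (X + 6) * (3 - X) * (deriv ^^ 3) f X
          + 16 * (X + 3) * (X - 12) * (deriv ^^ 2) f X
          + 4 * (11 * X + 6) * deriv f X
          - X * f X)) = (\<lambda>\<omega>.
      - 192 * ((H4 (Z \<omega>))\<^sup>2 * (deriv ^^ 3) f (H4 (Z \<omega>))) - 576 * (H4 (Z \<omega>) * (deriv ^^ 3) f (H4 (Z \<omega>)))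
      + 3456 * (deriv ^^ 3) f (H4 (Z \<omega>))
      + 16 * ((H4 (Z \<omega>))\<^sup>2 * (deriv ^^ 2) f (H4 (Z \<omega>))) - 144 * (H4 (Z \<omega>) * (deriv ^^ 2) f (H4 (Z \<omega>)))
      - 576 * (deriv ^^ 2) f (H4 (Z \<omega>))
      + 44 * (H4 (Z \<omega>) * (deriv ^^ 1) f (H4 (Z \<omega>))) + 24 * (deriv ^^ 1) f (H4 (Z \<omega>))
      - (H4 (Z \<omega>) * (deriv ^^ 0) f (H4 (Z \<omega>))))"
    by (rule ext) (unfold Let_def d01, algebra)
  have stmt_int: "integrable M (\<lambda>\<omega>. (let X = H4 (Z \<omega>) in
            192 * (X + 6) * (3 - X) * (deriv ^^ 3) f X
          + 16 * (X + 3) * (X - 12) * (deriv ^^ 2) f X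
          + 4 * (11 * X + 6) * deriv f X
          - X * f X))"
    unfolding stmt_eq
    by (intro Bochner_Integration.integrable_add Bochner_Integration.integrable_diff Bochner_Integration.integrable_mult_right Bochner_Integration.integrable_minus int2 int1 int0) auto
  have "(\<integral>\<omega>. (let X = H4 (Z \<omega>) in
            192 * (X + 6) * (3 - X) * (deriv ^^ 3) f X
          + 16 * (X + 3) * (X - 12) * (deriv ^^ 2) f X
          + 4 * (11 * X + 6) * deriv f X
          - X * f X) \<partial>M) = (\<integral>\<omega>. Itil (Z \<omega>) \<partial>M)"
  proof (rule integral_cong_AE)
    show "(\<lambda>\<omega>. (let X = H4 (Z \<omega>) in
            192 * (X + 6) * (3 - X) * (deriv ^^ 3) f X
          + 16 * (X + 3) * (X - 12) * (deriv ^^ 2) f X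
          + 4 * (11 * X + 6) * deriv f X
          - X * f X)) \<in> borel_measurable M"
      using stmt_int by (rule borel_measurable_integrable)
    show "(\<lambda>\<omega>. Itil (Z \<omega>)) \<in> borel_measurable M" by measurable
    show "AE \<omega> in M. (let X = H4 (Z \<omega>) in
            192 * (X + 6) * (3 - X) * (deriv ^^ 3) f X
          + 16 * (X + 3) * (X - 12) * (deriv ^^ 2) f X
          + 4 * (11 * X + 6) * deriv f X
          - X * f X) = Itil (Z \<omega>)"
      using AEH by eventually_elim (simp add: Itil_def Let_def D_def Fk_def)
  qed
  also have "\<dots> = (\<integral>z. ?phi z * Itil z \<partial>lborel)"
    by (rule distributed_integral[OF distr, symmetric]) auto
  also have "\<dots> = 0"
  proof -
    define S where "S = {sqrt 3, - sqrt 3}"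
    have S_fin: "finite S" by (simp add: S_def)
    have notS: "H4 z > -6" if "z \<notin> S" for z using that Hgt by (auto simp: S_def)
    have s3: "sqrt 3 < 2" by (rule real_less_lsqrt) auto
    have s3p: "sqrt 3 > 0" by simp
    define u where "u = (\<lambda>k z. Fk k (H4 z))"
    have H4even: "H4 (-z) = H4 z" for z by (simp add: H4_def)
    have Hder: "(H4 has_real_derivative (4*z^3 - 12*z)) (at z)" for z
    proof -
      have "((\<lambda>z. z ^ 4 - 6 * z ^ 2 + 3) has_real_derivative (4*z^3 - 12*z)) (at z)"
        by (rule derivative_eq_intros refl | simp)+
      then show ?thesis by (simp add: H4_def[abs_def])
    qed
    have uder: "(u k has_real_derivative (D (Suc k) (H4 z) * (4*z^3 - 12*z))) (at z)"
      if "k < 3" "H4 z > -6" for k z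
    proof -
      have "DERIV (Fk k) (H4 z) :> deriv (Fk k) (H4 z)"
        using diffF[OF that] by (simp add: DERIV_deriv_iff_real_differentiable)
      then have "DERIV (Fk k) (H4 z) :> D (Suc k) (H4 z)"
        using that by (simp add: D_def FkS)
      from DERIV_chain2[OF this Hder[of z]] show ?thesis by (simp add: u_def)
    qed
    have lim: "\<exists>L. (u k \<longlongrightarrow> L) (at (sqrt 3)) \<and> (u k \<longlongrightarrow> L) (at (- sqrt 3))" if k3: "k < 3" for k
    proof -
      have Sk: "Suc k \<in> {1,2,3}" using k3 by auto
      have SI: "set_integrable lborel {sqrt 3..2} (\<lambda>z. D (Suc k) (H4 z) * (4*z^3 - 12*z))"
        unfolding set_integrable_def
      proof (rule Bochner_Integration.integrable_bound)
        show "integrable lborel (\<lambda>z. (8 / ?phi 2) * (?phi z * D (Suc k) (H4 z)))"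
          by (intro Bochner_Integration.integrable_mult_right iH0[OF Sk])
        have Dk[measurable]: "D (Suc k) \<in> borel_measurable borel" using Dm k3 by auto
        show "(\<lambda>z. indicator {sqrt 3..2} z *\<^sub>R (D (Suc k) (H4 z) * (4 * z ^ 3 - 12 * z))) \<in> borel_measurable lborel"
          unfolding measurable_lborel2 by measurable
        show "AE z in lborel. norm (indicator {sqrt 3..2} z *\<^sub>R (D (Suc k) (H4 z) * (4 * z ^ 3 - 12 * z)))
            \<le> norm (8 / ?phi 2 * (?phi z * D (Suc k) (H4 z)))"
        proof (rule AE_I2)
          fix z :: real
          show "norm (indicator {sqrt 3..2} z *\<^sub>R (D (Suc k) (H4 z) * (4 * z ^ 3 - 12 * z)))
            \<le> norm (8 / ?phi 2 * (?phi z * D (Suc k) (H4 z)))"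
          proof (cases "z \<in> {sqrt 3..2}")
            case False then show ?thesis by simp
          next
            case True
            then have z1: "sqrt 3 \<le> z" "z \<le> 2" by auto
            have z0: "z \<ge> 0" using z1 s3p by linarith
            have zz3: "z^2 \<ge> 3" using power_mono[OF z1(1), of 2] by simp
            have zz4: "z^2 \<le> 4" using power_mono[OF z1(2) z0, of 2] by simp
            have hb1: "4 * z ^ 3 - 12 * z = 4 * z * (z^2 - 3)" by algebra
            have hb2: "0 \<le> 4 * z * (z^2 - 3)" using z0 zz3 by simp
            have hb3: "4 * z * (z^2 - 3) \<le> 4 * 2 * 1"
              by (rule mult_mono) (use z0 z1 zz3 zz4 in auto)
            have "exp (- 2) \<le> exp (- (z\<^sup>2 / 2))" using zz4 by simp
            then have phi2: "?phi 2 \<le> ?phi z"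
              by (simp add: std_normal_density_def divide_right_mono)
            have "8 \<le> 8 / ?phi 2 * ?phi z"
              using phi2 phipos[of 2] by (simp add: field_simps)
            then have "\<bar>4 * z ^ 3 - 12 * z\<bar> \<le> 8 / ?phi 2 * ?phi z"
              using hb1 hb2 hb3 by simp
            then have "\<bar>D (Suc k) (H4 z)\<bar> * \<bar>4 * z ^ 3 - 12 * z\<bar> \<le> \<bar>D (Suc k) (H4 z)\<bar> * (8 / ?phi 2 * ?phi z)"
              by (rule mult_left_mono) simp
            then show ?thesis using True phipos[of z] phipos[of 2]
              by (simp add: abs_mult mult_ac)
          qed
        qed
      qed
      have DV: "(u k has_real_derivative (D (Suc k) (H4 z) * (4*z^3 - 12*z))) (at z)"
        if "sqrt 3 < z" "z < 2" for z
      proof -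
        have "z \<notin> S" using that s3p by (auto simp: S_def)
        then show ?thesis by (rule uder[OF k3 notS])
      qed
      obtain L where LR: "(u k \<longlongrightarrow> L) (at_right (sqrt 3))"
        using lim_at_right_exists[OF s3 DV SI] by blast
      have sig: "filterlim (\<lambda>z. sqrt (6 - z^2)) (at_right (sqrt 3)) (at_left (sqrt 3))"
        unfolding filterlim_at
      proof
        have "((\<lambda>z. sqrt (6 - z^2)) \<longlongrightarrow> sqrt (6 - (sqrt 3)^2)) (at_left (sqrt 3))"
          by (intro tendsto_intros)
        then show "((\<lambda>z. sqrt (6 - z^2)) \<longlongrightarrow> sqrt 3) (at_left (sqrt 3))" by simp
        show "\<forall>\<^sub>F z in at_left (sqrt 3). sqrt (6 - z^2) \<in> {sqrt 3<..} \<and> sqrt (6 - z^2) \<noteq> sqrt 3"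
          using eventually_at_left_real[OF s3p]
        proof eventually_elim
          case (elim z)
          then have "z^2 < (sqrt 3)^2" by (intro power_strict_mono) auto
          then have "z^2 < 3" by simp
          then show ?case by auto
        qed
      qed
      have "((\<lambda>z. u k (sqrt (6 - z^2))) \<longlongrightarrow> L) (at_left (sqrt 3))"
        using filterlim_compose[OF LR sig] by (simp add: o_def)
      moreover have "\<forall>\<^sub>F z in at_left (sqrt 3). u k (sqrt (6 - z^2)) = u k z"
        using eventually_at_left_real[OF s3p]
      proof eventually_elim
        case (elim z)
        then have "z^2 < (sqrt 3)^2" by (intro power_strict_mono) auto
        then have "z^2 \<le> 6" by simp
        then have "(sqrt (6 - z^2))^2 = 6 - z^2" by simp
        have H4sq: "H4 y = (y^2)^2 - 6*y^2 + 3" for y unfolding H4_def by algebra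
        have "H4 (sqrt (6 - z^2)) = (6 - z^2)^2 - 6*(6 - z^2) + 3"
          unfolding H4sq \<open>(sqrt (6 - z^2))^2 = 6 - z^2\<close> ..
        also have "\<dots> = H4 z" unfolding H4_def by algebra
        finally have "H4 (sqrt (6 - z^2)) = H4 z" .
        then show ?case by (simp add: u_def)
      qed
      ultimately have LL: "(u k \<longlongrightarrow> L) (at_left (sqrt 3))" by (rule Lim_transform_eventually)
      have Lat: "(u k \<longlongrightarrow> L) (at (sqrt 3))" by (rule filterlim_split_at[OF LL LR])
      have "((\<lambda>z. u k (- z)) \<longlongrightarrow> L) (at (sqrt 3))"
        using Lat by (simp add: u_def H4even)
      then have "(u k \<longlongrightarrow> L) (at (- sqrt 3))"
        by (simp add: filtermap_at_minus[symmetric] filterlim_filtermap)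
      with Lat show ?thesis by blast
    qed
    then have "\<forall>k. \<exists>L. k < 3 \<longrightarrow> (u k \<longlongrightarrow> L) (at (sqrt 3)) \<and> (u k \<longlongrightarrow> L) (at (- sqrt 3))"
      by blast
    then obtain L where L: "\<And>k. k < 3 \<Longrightarrow> (u k \<longlongrightarrow> L k) (at (sqrt 3)) \<and> (u k \<longlongrightarrow> L k) (at (- sqrt 3))"
      by metis
    have Lz: "(u k \<longlongrightarrow> L k) (at z)" if "k < 3" "z \<in> S" for k z
      using L[OF that(1)] that(2) by (auto simp: S_def)
    define v where "v = (\<lambda>k z. if z \<in> S then L k else u k z)"
    define a where "a = (\<lambda>z::real. 48*z*(z^2-3)*(6-z^2))"
    define b where "b = (\<lambda>z::real. 4*z^5 - 48*z^3 + 156*z)"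
    define c where "c = (\<lambda>z::real. z^3 - 3*z)"
    define F where "F = (\<lambda>z. (a z * v 2 z + b z * v 1 z + c z * v 0 z) * ?phi z)"
    have phider: "(?phi has_real_derivative (- z * ?phi z)) (at z)" for z
    proof -
      have e: "?phi = (\<lambda>x. (1 / sqrt (2 * pi)) * exp (- x\<^sup>2 / 2))"
        by (rule ext) (simp add: std_normal_density_def)
      have "((\<lambda>x. (1 / sqrt (2 * pi)) * exp (- x\<^sup>2 / 2)) has_real_derivative
          (1 / sqrt (2 * pi)) * (exp (- z\<^sup>2 / 2) * (- z))) (at z)"
        by (rule derivative_eq_intros refl | simp)+
      then show ?thesis unfolding e by (simp add: algebra_simps)
    qed
    have da: "(a has_real_derivative (48*(-5*z^4+27*z^2-18))) (at z)" for z
      unfolding a_def by ((rule derivative_eq_intros refl | simp)+, (simp add: algebra_simps; algebra)?)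
    have db: "(b has_real_derivative (20*z^4 - 144*z^2 + 156)) (at z)" for z
      unfolding b_def by ((rule derivative_eq_intros refl | simp)+, (simp add: algebra_simps; algebra)?)
    have dc: "(c has_real_derivative (3*z^2 - 3)) (at z)" for z
      unfolding c_def by ((rule derivative_eq_intros refl | simp)+, (simp add: algebra_simps; algebra)?)
    have openS: "open (- S)" using S_fin by (simp add: finite_imp_closed open_Compl)
    have vz: "v k z = D k (H4 z)" if "z \<notin> S" for k z
      using that notS[OF that] by (simp add: v_def u_def D_def)
    have vder: "(v k has_real_derivative (D (Suc k) (H4 z) * (4*z^3 - 12*z))) (at z)"
      if "k < 3" "z \<notin> S" for k z
      by (rule has_field_derivative_transform_within_open[OF uder[OF that(1) notS[OF that(2)]] openS])
         (use that in \<open>auto simp: v_def\<close>)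
    have Fder: "(F has_real_derivative (?phi z * Itil z)) (at z)" if zS: "z \<notin> S" for z
    proof -
      have "((\<lambda>z. a z * v 2 z + b z * v 1 z + c z * v 0 z) has_real_derivative
          (48*(-5*z^4+27*z^2-18)) * v 2 z + (D 3 (H4 z) * (4*z^3 - 12*z)) * a z
        + ((20*z^4 - 144*z^2 + 156) * v 1 z + (D 2 (H4 z) * (4*z^3 - 12*z)) * b z)
        + ((3*z^2 - 3) * v 0 z + (D 1 (H4 z) * (4*z^3 - 12*z)) * c z)) (at z)"
        using vder[of 2 z] vder[of 1 z] vder[of 0 z] zS
        by (intro DERIV_add DERIV_mult da db dc) (simp_all add: numeral_3_eq_3 numeral_2_eq_2)
      from DERIV_mult[OF this phider[of z]]
      show ?thesis unfolding F_def
      proof (rule DERIV_cong)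
        show "((48*(-5*z^4+27*z^2-18)) * v 2 z + (D 3 (H4 z) * (4*z^3 - 12*z)) * a z
          + ((20*z^4 - 144*z^2 + 156) * v 1 z + (D 2 (H4 z) * (4*z^3 - 12*z)) * b z)
          + ((3*z^2 - 3) * v 0 z + (D 1 (H4 z) * (4*z^3 - 12*z)) * c z)) * ?phi z
          + (- z * ?phi z) * (a z * v 2 z + b z * v 1 z + c z * v 0 z) = ?phi z * Itil z"
          unfolding vz[OF zS] Itil_def Let_def a_def b_def c_def H4_def by algebra
      qed
    qed
    have evS: "\<forall>\<^sub>F y in at z. y \<notin> S" for z
    proof -
      have "open (- (S - {z}))" using S_fin by (intro open_Compl finite_imp_closed) auto
      from eventually_at_in_open[OF this] show ?thesis by (rule eventually_mono) auto
    qed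
    have Fcont: "continuous_on UNIV F"
    proof (intro continuous_at_imp_continuous_on ballI)
      fix z :: real
      show "isCont F z"
      proof (cases "z \<in> S")
        case False
        show ?thesis using Fder[OF False] by (rule DERIV_isCont)
      next
        case True
        have "((\<lambda>y. (a y * u 2 y + b y * u 1 y + c y * u 0 y) * ?phi y) \<longlongrightarrow>
              (a z * L 2 + b z * L 1 + c z * L 0) * ?phi z) (at z)"
        proof (intro tendsto_intros Lz True)
          show "(a \<longlongrightarrow> a z) (at z)" unfolding a_def by (intro tendsto_intros)
          show "(b \<longlongrightarrow> b z) (at z)" unfolding b_def by (intro tendsto_intros)
          show "(c \<longlongrightarrow> c z) (at z)" unfolding c_def by (intro tendsto_intros)
          show "(?phi \<longlongrightarrow> ?phi z) (at z)"
            using DERIV_isCont[OF phider[of z]] by (simp add: isCont_def)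
        qed auto
        moreover have "\<forall>\<^sub>F y in at z. (a y * u 2 y + b y * u 1 y + c y * u 0 y) * ?phi y = F y"
          using evS[of z] by eventually_elim (simp add: F_def v_def)
        ultimately have "(F \<longlongrightarrow> (a z * L 2 + b z * L 1 + c z * L 0) * ?phi z) (at z)"
          by (rule Lim_transform_eventually)
        then show ?thesis using True by (simp add: isCont_def F_def v_def)
      qed
    qed
    have Fodd: "F (- t) = - F t" if "t \<notin> S" for t
    proof -
      have "- t \<notin> S" using that by (auto simp: S_def)
      then show ?thesis using that
        by (simp add: F_def v_def u_def H4even a_def b_def c_def std_normal_density_def algebra_simps)
    qed
    define r where "r = (\<lambda>z. 48 * \<bar>?phi z * (H4 z * D 2 (H4 z))\<bar> + 720 * \<bar>?phi z * D 2 (H4 z)\<bar>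
        + 4 * \<bar>?phi z * (H4 z * D 1 (H4 z))\<bar> + 144 * \<bar>?phi z * D 1 (H4 z)\<bar>
        + \<bar>?phi z * (H4 z * D 0 (H4 z))\<bar>)"
    have r_int: "integrable lborel r"
      unfolding r_def
      by (intro Bochner_Integration.integrable_add Bochner_Integration.integrable_mult_right
          Bochner_Integration.integrable_abs iH1 iH0) auto
    have bnd: "\<bar>F z\<bar> \<le> z * r z" if z3: "z \<ge> 3" for z
    proof -
      have "z \<noteq> sqrt 3" "z \<noteq> - sqrt 3" using z3 s3 s3p by linarith+
      then have zS: "z \<notin> S" by (simp add: S_def)
      define w where "w = z^2"
      have w9: "w \<ge> 9" using power_mono[OF z3, of 2] by (simp add: w_def)
      have z0: "z \<ge> 0" using z3 by simp
      have HW: "H4 z = w^2 - 6*w + 3" unfolding H4_def w_def by algebra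
      have Hpos: "H4 z \<ge> 0"
      proof -
        have "w * (w - 6) \<ge> 0" using w9 by simp
        then show ?thesis unfolding HW by (simp add: algebra_simps power2_eq_square)
      qed
      have a1: "a z = - (48 * z * ((w - 3) * (w - 6)))" unfolding a_def w_def by algebra
      have a2: "z * (48 * H4 z + 720) + a z = 144 * z * w" unfolding a_def w_def H4_def by algebra
      have a3: "0 \<le> 48 * z * ((w - 3) * (w - 6))" using w9 z0 by simp
      have ha: "\<bar>a z\<bar> \<le> z * (48 * H4 z + 720)"
        using a1 a2 a3 mult_nonneg_nonneg[OF z0, of w] w9 by (simp add: abs_if; linarith)
      have b1: "b z = 4 * z * ((w - 6)^2 + 3)" unfolding b_def w_def by algebra
      have b2: "z * (4 * H4 z + 144) - b z = 24 * z * w" unfolding b_def w_def H4_def by algebra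
      have b3: "0 \<le> 4 * z * ((w - 6)^2 + 3)" using z0 by simp
      have hb: "\<bar>b z\<bar> \<le> z * (4 * H4 z + 144)"
        using b1 b2 b3 mult_nonneg_nonneg[OF z0, of w] w9 by (simp add: abs_if; linarith)
      have c1: "c z = z * (w - 3)" unfolding c_def w_def by algebra
      have c2: "z * H4 z - c z = z * ((w - 1) * (w - 6))" unfolding c_def w_def H4_def by algebra
      have c3: "0 \<le> z * ((w - 1) * (w - 6))" using z0 w9 by simp
      have c4: "0 \<le> z * (w - 3)" using z0 w9 by simp
      have hc: "\<bar>c z\<bar> \<le> z * H4 z"
        using c1 c2 c3 c4 by (simp add: abs_if; linarith)
      define d0 where "d0 = D 0 (H4 z)"
      define d1 where "d1 = D 1 (H4 z)"
      define d2 where "d2 = D 2 (H4 z)"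
      have Fz: "F z = (a z * d2 + b z * d1 + c z * d0) * ?phi z"
        using vz[OF zS] by (simp add: F_def d0_def d1_def d2_def)
      have "\<bar>a z * d2 + b z * d1 + c z * d0\<bar> \<le> \<bar>a z\<bar> * \<bar>d2\<bar> + \<bar>b z\<bar> * \<bar>d1\<bar> + \<bar>c z\<bar> * \<bar>d0\<bar>"
        by (simp add: abs_mult[symmetric])
      also have "\<dots> \<le> z * (48 * H4 z + 720) * \<bar>d2\<bar> + z * (4 * H4 z + 144) * \<bar>d1\<bar> + z * H4 z * \<bar>d0\<bar>"
        by (intro add_mono mult_right_mono ha hb hc) auto
      finally have ineq: "\<bar>a z * d2 + b z * d1 + c z * d0\<bar> \<le>
          z * (48 * H4 z + 720) * \<bar>d2\<bar> + z * (4 * H4 z + 144) * \<bar>d1\<bar> + z * H4 z * \<bar>d0\<bar>" .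
      have "\<bar>F z\<bar> = \<bar>a z * d2 + b z * d1 + c z * d0\<bar> * ?phi z"
        using phipos[of z] by (simp add: Fz abs_mult)
      also have "\<dots> \<le> (z * (48 * H4 z + 720) * \<bar>d2\<bar> + z * (4 * H4 z + 144) * \<bar>d1\<bar> + z * H4 z * \<bar>d0\<bar>) * ?phi z"
        by (rule mult_right_mono[OF ineq]) (use phipos[of z] in simp)
      also have "\<dots> = z * r z"
        using phipos[of z] Hpos
        by (simp add: r_def d0_def d1_def d2_def abs_mult algebra_simps)
      finally show ?thesis .
    qed
    have F0: "(F \<longlongrightarrow> 0) at_top"
      by (rule lim_zero_at_top[OF g_int S_fin Fcont Fder r_int bnd]) auto
    have "((\<lambda>t. 2 * F t) \<longlongrightarrow> 0) at_top" using tendsto_mult_right_zero[OF F0, of 2] by simp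
    moreover have "\<forall>\<^sub>F t in at_top. 2 * F t = F t - F (- t)"
      using eventually_ge_at_top[of 3]
    proof eventually_elim
      case (elim t)
      then have "t \<noteq> sqrt 3" "t \<noteq> - sqrt 3" using s3 s3p by linarith+
      then have "t \<notin> S" by (simp add: S_def)
      then show ?case using Fodd[of t] by simp
    qed
    ultimately have "((\<lambda>t. F t - F (- t)) \<longlongrightarrow> 0) at_top" by (rule Lim_transform_eventually)
    note ftc_zero[OF g_int S_fin Fcont Fder this]
    then show ?thesis by simp
  qed

  finally show ?thesis .
qed

end
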